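(* Let $V=\{1,\dots,n\}$, let $(\bar\Omega,\mathcal F,\mathbb P)$ be a probability space, and let $\sigma:\{0,1\}^n\times\bar\Omega\to\mathbb R$ be such that for every $\omega\in\bar\Omega$ the set function $X\mapsto\sigma(X,\omega)$ (identifying $X\subseteq V$ with its characteristic vector $x\in\{0,1\}^n$) is nondecreasing and submodular, and for each $x$ the random variable $\sigma(x)=\sigma(x,\cdot)$ is integrable. Let $\mathcal X\subseteq\{0,1\}^n$ and $\alpha\in(0,1]$. Let $\bar x\in\mathcal X$ with support $\bar X=\{j\in V:\bar x_j=1\}$, let $r=|V\setminus\bar X|$ and let $j_1,\dots,j_r$ be any ordering of $V\setminus\bar X$. For $i=1,\dots,r$ define $\bar x^{j_i}=\mathbf 1-\sum_{l=i+1}^{r}\mathbf e_{j_l}$ and $\bar\delta_{j_i}(\bar x)=\mathrm{CVaR}_\alpha(\sigma(\bar x^{j_i}))-\mathrm{CVaR}_\alpha(\sigma(\bar x))$. Then for every $x\in\mathcal X$ and every $\psi\in\mathbb R$ with $\psi\le\mathrm{CVaR}_\alpha(\sigma(x))$, $$\psi\le \mathrm{CVaR}_\alpha(\sigma(\bar x))+\sum_{i=1}^r\bar\delta_{j_i}(\bar x)\,x_{j_i}.$$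
   Context: For a random variable $Y$ with finite expectation and $\alpha\in(0,1]$, $\mathrm{CVaR}_\alpha(Y)=\max_{\eta\in\mathbb R}\{\eta-\frac1\alpha\mathbb E([\eta-Y]_+)\}$, where $[z]_+=\max(z,0)$. $\mathbf e_j$ is the $j$-th unit vector in $\mathbb R^n$ and $\mathbf 1$ is the all-ones vector in $\mathbb R^n$. *)

theory Defs
  imports "HOL-Probability.Probability"
begin

text \<open>Conditional value-at-risk: CVaR_alpha(Y) = max over eta of
  eta - (1/alpha) E([eta - Y]_+). The maximum is rendered as a supremum.\<close>
definition CVaR :: "'a measure \<Rightarrow> real \<Rightarrow> ('a \<Rightarrow> real) \<Rightarrow> real" where
  "CVaR M \<alpha> Y = (SUP \<eta>::real. \<eta> - (1 / \<alpha>) * (\<integral>\<omega>. max (\<eta> - Y \<omega>) 0 \<partial>M))"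

end

theory Submission
  imports Defs
begin


lemma integ_pos:
  fixes Y :: "'a \<Rightarrow> real"
  assumes "prob_space M" "integrable M Y"
  shows "integrable M (\<lambda>\<omega>. max (\<eta> - Y \<omega>) 0)"
proof -
  interpret prob_space M by fact
  have "integrable M (\<lambda>\<omega>. \<eta> - Y \<omega>)" using assms(2) by auto
  from Bochner_Integration.integrable_max[OF this, of "\<lambda>_. 0"] show ?thesis by simp
qed

lemma cvar_bdd:
  fixes Y :: "'a \<Rightarrow> real"
  assumes "prob_space M" "integrable M Y" "0 < \<alpha>" "\<alpha> \<le> 1"
  shows "bdd_above (range (\<lambda>\<eta>::real. \<eta> - (1 / \<alpha>) * (\<integral>\<omega>. max (\<eta> - Y \<omega>) 0 \<partial>M)))"
proof -
  interpret prob_space M by fact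
  have "\<eta> - (1 / \<alpha>) * (\<integral>\<omega>. max (\<eta> - Y \<omega>) 0 \<partial>M) \<le> (\<integral>\<omega>. Y \<omega> \<partial>M)" for \<eta>
  proof -
    let ?I = "\<integral>\<omega>. max (\<eta> - Y \<omega>) 0 \<partial>M"
    have i1: "integrable M (\<lambda>\<omega>. \<eta> - Y \<omega>)" using assms(2) by auto
    have "(\<integral>\<omega>. \<eta> - Y \<omega> \<partial>M) \<le> ?I"
      by (rule integral_mono[OF i1 integ_pos[OF assms(1,2)]]) auto
    moreover have "(\<integral>\<omega>. \<eta> - Y \<omega> \<partial>M) = \<eta> - (\<integral>\<omega>. Y \<omega> \<partial>M)"
      using assms(2) by (simp add: Bochner_Integration.integral_diff prob_space)
    moreover have "0 \<le> ?I" by (intro integral_nonneg_AE) auto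
    moreover have "?I \<le> (1/\<alpha>) * ?I"
    proof -
      have "1 \<le> 1/\<alpha>" using assms by simp
      from mult_right_mono[OF this \<open>0 \<le> ?I\<close>] show ?thesis by simp
    qed
    ultimately show ?thesis by linarith
  qed
  then show ?thesis by (intro bdd_aboveI2) auto
qed

lemma cvar_mono:
  fixes Y Z :: "'a \<Rightarrow> real"
  assumes "prob_space M" "integrable M Y" "integrable M Z" "0 < \<alpha>" "\<alpha> \<le> 1"
    and le: "\<And>\<omega>. \<omega> \<in> space M \<Longrightarrow> Y \<omega> \<le> Z \<omega>"
  shows "CVaR M \<alpha> Y \<le> CVaR M \<alpha> Z"
  unfolding CVaR_def
proof (rule cSUP_mono)
  show "bdd_above (range (\<lambda>\<eta>::real. \<eta> - (1 / \<alpha>) * (\<integral>\<omega>. max (\<eta> - Z \<omega>) 0 \<partial>M)))"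
    by (rule cvar_bdd) fact+
  fix \<eta> :: real
  have "(\<integral>\<omega>. max (\<eta> - Z \<omega>) 0 \<partial>M) \<le> (\<integral>\<omega>. max (\<eta> - Y \<omega>) 0 \<partial>M)"
    by (rule integral_mono[OF integ_pos[OF assms(1,3)] integ_pos[OF assms(1,2)]]) (auto dest: le)
  then have "\<eta> - (1 / \<alpha>) * (\<integral>\<omega>. max (\<eta> - Y \<omega>) 0 \<partial>M) \<le> \<eta> - (1 / \<alpha>) * (\<integral>\<omega>. max (\<eta> - Z \<omega>) 0 \<partial>M)"
    using assms(4) by (simp add: divide_right_mono)
  then show "\<exists>m\<in>UNIV. \<eta> - (1 / \<alpha>) * (\<integral>\<omega>. max (\<eta> - Y \<omega>) 0 \<partial>M) \<le> m - (1 / \<alpha>) * (\<integral>\<omega>. max (m - Z \<omega>) 0 \<partial>M)"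
    by blast
qed auto

theorem proposition2:
  fixes M :: "'a measure" and n :: nat and \<sigma> :: "nat set \<Rightarrow> 'a \<Rightarrow> real"
    and \<X> :: "nat set set" and \<alpha> \<psi> :: real and Xbar X :: "nat set" and js :: "nat list"
  assumes "prob_space M"
    and mono: "\<And>\<omega> A B. \<omega> \<in> space M \<Longrightarrow> A \<subseteq> B \<Longrightarrow> B \<subseteq> {1..n} \<Longrightarrow> \<sigma> A \<omega> \<le> \<sigma> B \<omega>"
    and submod: "\<And>\<omega> A B. \<omega> \<in> space M \<Longrightarrow> A \<subseteq> {1..n} \<Longrightarrow> B \<subseteq> {1..n} \<Longrightarrow>
                   \<sigma> (A \<union> B) \<omega> + \<sigma> (A \<inter> B) \<omega> \<le> \<sigma> A \<omega> + \<sigma> B \<omega>"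
    and integ: "\<And>A. A \<subseteq> {1..n} \<Longrightarrow> integrable M (\<sigma> A)"
    and "\<X> \<subseteq> Pow {1..n}"
    and "0 < \<alpha>" and "\<alpha> \<le> 1"
    and "Xbar \<in> \<X>"
    and "distinct js" and "set js = {1..n} - Xbar"
    and "X \<in> \<X>"
    and "\<psi> \<le> CVaR M \<alpha> (\<sigma> X)"
  shows "\<psi> \<le> CVaR M \<alpha> (\<sigma> Xbar)
           + (\<Sum>k<length js. (CVaR M \<alpha> (\<sigma> ({1..n} - set (drop (Suc k) js))) - CVaR M \<alpha> (\<sigma> Xbar))
                              * (if js ! k \<in> X then 1 else 0))"
proof -
  define S where "S k = {1..n} - set (drop (Suc k) js)" for k
  have Xb: "Xbar \<subseteq> {1..n}" using assms by auto
  have Xs: "X \<subseteq> {1..n}" using assms by auto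
  have cm: "CVaR M \<alpha> (\<sigma> A) \<le> CVaR M \<alpha> (\<sigma> B)" if "A \<subseteq> B" "B \<subseteq> {1..n}" for A B
    using that by (intro cvar_mono integ assms(1) mono \<open>0 < \<alpha>\<close> \<open>\<alpha> \<le> 1\<close>) auto
  have XbS: "Xbar \<subseteq> S k" for k
  proof -
    have "set (drop (Suc k) js) \<subseteq> set js" by (rule set_drop_subset)
    then show ?thesis using Xb assms(10) unfolding S_def by auto
  qed
  have nn: "0 \<le> (CVaR M \<alpha> (\<sigma> (S k)) - CVaR M \<alpha> (\<sigma> Xbar)) * (if js ! k \<in> X then 1 else 0)" for k
    using cm[OF XbS] by (auto simp: S_def)
  let ?f = "\<lambda>k. (CVaR M \<alpha> (\<sigma> (S k)) - CVaR M \<alpha> (\<sigma> Xbar)) * (if js ! k \<in> X then 1 else 0)"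
  have main: "CVaR M \<alpha> (\<sigma> X) \<le> CVaR M \<alpha> (\<sigma> Xbar) + (\<Sum>k<length js. ?f k)"
  proof (cases "\<exists>k<length js. js ! k \<in> X")
    case True
    define K where "K = {k. k < length js \<and> js ! k \<in> X}"
    have fK: "finite K" "K \<noteq> {}" using True unfolding K_def by auto
    define m where "m = Max K"
    have mK: "m \<in> K" using fK unfolding m_def by simp
    have mmax: "k \<le> m" if "k \<in> K" for k using fK that unfolding m_def by simp
    have "X \<subseteq> S m"
    proof
      fix x assume x: "x \<in> X"
      have "x \<notin> set (drop (Suc m) js)"
      proof
        assume "x \<in> set (drop (Suc m) js)"
        then obtain i where i: "i < length (drop (Suc m) js)" "drop (Suc m) js ! i = x"
          by (auto simp: in_set_conv_nth)
        then have "Suc m + i \<in> K" using x unfolding K_def by auto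
        then show False using mmax by fastforce
      qed
      then show "x \<in> S m" using x Xs unfolding S_def by auto
    qed
    then have "CVaR M \<alpha> (\<sigma> X) \<le> CVaR M \<alpha> (\<sigma> (S m))" by (intro cm) (auto simp: S_def)
    also have "\<dots> = CVaR M \<alpha> (\<sigma> Xbar) + ?f m" using mK unfolding K_def by simp
    also have "?f m \<le> (\<Sum>k<length js. ?f k)"
      by (rule member_le_sum) (use mK nn in \<open>auto simp: K_def\<close>)
    finally show ?thesis by simp
  next
    case False
    have "X \<subseteq> Xbar"
    proof
      fix x assume x: "x \<in> X"
      show "x \<in> Xbar"
      proof (rule ccontr)
        assume "x \<notin> Xbar"
        then have "x \<in> set js" using x Xs assms(10) by auto
        then obtain k where "k < length js" "js ! k = x" by (auto simp: in_set_conv_nth)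
        then show False using False x by auto
      qed
    qed
    then have "CVaR M \<alpha> (\<sigma> X) \<le> CVaR M \<alpha> (\<sigma> Xbar)" by (intro cm Xb)
    moreover have "0 \<le> (\<Sum>k<length js. ?f k)" by (intro sum_nonneg nn)
    ultimately show ?thesis by simp
  qed
  show ?thesis using main assms(12) unfolding S_def by simp
qed

end
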